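(* Let $\mathbf{A}\in\mathbb{K}[X]^{m\times m}$ be nonsingular, $\mathbf{s}\in\mathbb{Z}^m$, and $\sigma\in\mathbb{N}$ with $\sigma>\deg(\det\mathbf{A})$. Let $\pi$ be a permutation of $\{1,\dots,m\}$ such that $\hat{\mathbf{s}}=(s_{\pi(1)},\dots,s_{\pi(m)})$ is non-decreasing; define $\hat{\mathbf{t}}$ by $\hat t_1=0$ and, for $2\le i\le m$, $\hat t_i-\hat t_{i-1}=\sigma$ if $\hat s_i-\hat s_{i-1}\ge\sigma$ and $\hat t_i-\hat t_{i-1}=\hat s_i-\hat s_{i-1}$ otherwise; and let $\mathbf{t}=(\hat t_{\pi^{-1}(1)},\dots,\hat t_{\pi^{-1}(m)})$. Then $\mathbf{t}\in\mathbb{N}^m$, $\min(\mathbf{t})=0$, $\max(\mathbf{t})\le(m-1)\sigma$, $t_1+\cdots+t_m\le m^2\sigma/2$, and the $\mathbf{s}$-Popov form of $\mathbf{A}$ is also in $\mathbf{t}$-Popov form.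
   Context: For $\mathbf{s}\in\mathbb{Z}^m$ and nonzero $\mathbf{p}=[p_j]\in\mathbb{K}[X]^{1\times m}$, the $\mathbf{s}$-degree of $\mathbf{p}$ is $\max_j(\deg p_j+s_j)$ and its $\mathbf{s}$-pivot index is the largest $j$ attaining it, with $p_j$ its pivot entry. A nonsingular matrix is in $\mathbf{s}$-Popov form if its $\mathbf{s}$-pivot entries are monic and on its diagonal and in each column the nonpivot entries have degree less than the pivot entry. The $\mathbf{s}$-Popov form of $\mathbf{A}$ is the unique matrix in $\mathbf{s}$-Popov form that is left-unimodularly equivalent to $\mathbf{A}$. *)

theory Defs
  imports "Jordan_Normal_Form.Determinant" "HOL-Computational_Algebra.Polynomial"
    "HOL-Combinatorics.Permutations"
begin

(* Matrices are 0-indexed: rows/columns 0..<n. Shifts are functions nat => int. *)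

definition row_sdeg :: "(nat \<Rightarrow> int) \<Rightarrow> 'a::zero poly mat \<Rightarrow> nat \<Rightarrow> int" where
  "row_sdeg s P i = Max {int (degree (P $$ (i,j))) + s j | j. j < dim_col P \<and> P $$ (i,j) \<noteq> 0}"

definition row_spivot :: "(nat \<Rightarrow> int) \<Rightarrow> 'a::zero poly mat \<Rightarrow> nat \<Rightarrow> nat" where
  "row_spivot s P i = (GREATEST j. j < dim_col P \<and> P $$ (i,j) \<noteq> 0 \<and>
      int (degree (P $$ (i,j))) + s j = row_sdeg s P i)"

definition is_popov :: "(nat \<Rightarrow> int) \<Rightarrow> 'a::field poly mat \<Rightarrow> bool" where
  "is_popov s P \<longleftrightarrow> (\<exists>n. P \<in> carrier_mat n n \<and> det P \<noteq> 0 \<and>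
     (\<forall>i<n. (\<exists>j<n. P $$ (i,j) \<noteq> 0) \<and> row_spivot s P i = i \<and>
            lead_coeff (P $$ (i,i)) = 1 \<and>
            (\<forall>k<n. k \<noteq> i \<longrightarrow> P $$ (k,i) = 0 \<or> degree (P $$ (k,i)) < degree (P $$ (i,i)))))"

definition unimodular :: "'a::field poly mat \<Rightarrow> nat \<Rightarrow> bool" where
  "unimodular U n \<longleftrightarrow> U \<in> carrier_mat n n \<and> is_unit (det U)"

definition left_uni_equiv :: "'a::field poly mat \<Rightarrow> 'a poly mat \<Rightarrow> bool" where
  "left_uni_equiv P A \<longleftrightarrow> (\<exists>U. unimodular U (dim_row A) \<and> P = U * A)"

primrec tHat :: "(nat \<Rightarrow> int) \<Rightarrow> (nat \<Rightarrow> nat) \<Rightarrow> nat \<Rightarrow> nat \<Rightarrow> int" where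
  "tHat s p sg 0 = 0"
| "tHat s p sg (Suc i) = tHat s p sg i +
     (if s (p (Suc i)) - s (p i) \<ge> int sg then int sg else s (p (Suc i)) - s (p i))"

definition tShift :: "(nat \<Rightarrow> int) \<Rightarrow> (nat \<Rightarrow> nat) \<Rightarrow> nat \<Rightarrow> nat \<Rightarrow> int" where
  "tShift s p sg j = tHat s p sg (inv_into UNIV p j)"

end

theory Submission
  imports Defs
begin

lemma tHat_diff:
  assumes mono: "\<forall>i j. i \<le> j \<and> j < m \<longrightarrow> s (\<pi> i) \<le> s (\<pi> j)"
    and ab: "a \<le> b" and bm: "b < m"
  shows "0 \<le> tHat s \<pi> sg b - tHat s \<pi> sg a \<and>
         tHat s \<pi> sg b - tHat s \<pi> sg a \<le> s (\<pi> b) - s (\<pi> a) \<and>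
         (tHat s \<pi> sg b - tHat s \<pi> sg a = s (\<pi> b) - s (\<pi> a) \<or>
          tHat s \<pi> sg b - tHat s \<pi> sg a \<ge> int sg)"
  using ab bm
proof (induction b)
  case 0
  then show ?case by simp
next
  case (Suc b)
  show ?case
  proof (cases "a = Suc b")
    case True
    then show ?thesis by simp
  next
    case False
    with Suc.prems have ab: "a \<le> b" and bm: "b < m" by auto
    note IH = Suc.IH[OF ab bm]
    have d: "s (\<pi> b) \<le> s (\<pi> (Suc b))" using mono Suc.prems by auto
    show ?thesis using IH d by (auto simp: algebra_simps)
  qed
qed

lemma tHat_le:
  assumes "b < m" and mono: "\<forall>i j. i \<le> j \<and> j < m \<longrightarrow> s (\<pi> i) \<le> s (\<pi> j)"
  shows "tHat s \<pi> sg b \<le> int b * int sg"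
  using assms(1)
proof (induction b)
  case 0 then show ?case by simp
next
  case (Suc b)
  then have "tHat s \<pi> sg b \<le> int b * int sg" by simp
  then show ?case by (auto simp: algebra_simps)
qed

lemma perm_id_if_le:
  fixes p :: "nat \<Rightarrow> nat"
  assumes p: "p permutes {0..<n}" and le: "\<forall>k<n. p k \<le> k"
  shows "p = id"
proof -
  have "p i = i" for i :: nat
  proof (induction i rule: less_induct)
    case (less i)
    show ?case
    proof (cases "i < n")
      case False
      then show ?thesis using p by (simp add: permutes_def)
    next
      case True
      have "p i \<le> i" using le True by auto
      moreover have "\<not> p i < i"
      proof
        assume "p i < i"
        then have "p (p i) = p i" using less by auto
        then have "p i = i" using permutes_inj[OF p] by (meson injD)
        with \<open>p i < i\<close> show False by simp
      qed
      ultimately show ?thesis by simp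
    qed
  qed
  then show ?thesis by auto
qed

lemma popov_dims:
  assumes "is_popov s P" "P \<in> carrier_mat n n"
  shows "det P \<noteq> 0 \<and> (\<forall>i<n. (\<exists>j<n. P $$ (i,j) \<noteq> 0) \<and> row_spivot s P i = i \<and>
            lead_coeff (P $$ (i,i)) = 1 \<and>
            (\<forall>k<n. k \<noteq> i \<longrightarrow> P $$ (k,i) = 0 \<or> degree (P $$ (k,i)) < degree (P $$ (i,i))))"
  using assms unfolding is_popov_def by auto

lemma pivot_facts:
  assumes pop: "is_popov s P" and car: "P \<in> carrier_mat n n" and i: "i < n"
  shows "P $$ (i,i) \<noteq> 0"
    and "\<And>j. j < n \<Longrightarrow> P $$ (i,j) \<noteq> 0 \<Longrightarrow>
            int (degree (P $$ (i,j))) + s j \<le> int (degree (P $$ (i,i))) + s i"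
    and "\<And>j. j < n \<Longrightarrow> i < j \<Longrightarrow> P $$ (i,j) \<noteq> 0 \<Longrightarrow>
            int (degree (P $$ (i,j))) + s j < int (degree (P $$ (i,i))) + s i"
proof -
  note D = popov_dims[OF pop car]
  have dc: "dim_col P = n" using car by auto
  define S where "S = {int (degree (P $$ (i,j))) + s j | j. j < dim_col P \<and> P $$ (i,j) \<noteq> 0}"
  have rs: "row_sdeg s P i = Max S" unfolding row_sdeg_def S_def by simp
  have finS: "finite S" unfolding S_def dc by auto
  obtain j1 where j1: "j1 < n" "P $$ (i,j1) \<noteq> 0" using D i by auto
  have neS: "S \<noteq> {}" unfolding S_def dc using j1 by auto
  have "Max S \<in> S" using finS neS by simp
  then obtain j0 where j0: "j0 < n" "P $$ (i,j0) \<noteq> 0" "int (degree (P $$ (i,j0))) + s j0 = Max S"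
    unfolding S_def dc by auto
  define Q where "Q = (\<lambda>j. j < dim_col P \<and> P $$ (i,j) \<noteq> 0 \<and>
      int (degree (P $$ (i,j))) + s j = row_sdeg s P i)"
  have Qj0: "Q j0" unfolding Q_def using j0 rs dc by auto
  have bnd: "\<forall>y. Q y \<longrightarrow> y \<le> n" unfolding Q_def dc by auto
  have piv: "(GREATEST j. Q j) = i" using D i unfolding row_spivot_def Q_def by auto
  have Qi: "Q i" using GreatestI_nat[of Q j0 n, OF Qj0] bnd piv by auto
  have Qle: "\<And>j. Q j \<Longrightarrow> j \<le> i" using Greatest_le_nat[of Q _ n] bnd piv by auto
  show "P $$ (i,i) \<noteq> 0" using Qi unfolding Q_def by auto
  have le: "\<And>j. j < n \<Longrightarrow> P $$ (i,j) \<noteq> 0 \<Longrightarrow>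
            int (degree (P $$ (i,j))) + s j \<le> row_sdeg s P i"
    unfolding rs using finS by (intro Max_ge) (auto simp: S_def dc)
  show "\<And>j. j < n \<Longrightarrow> P $$ (i,j) \<noteq> 0 \<Longrightarrow>
            int (degree (P $$ (i,j))) + s j \<le> int (degree (P $$ (i,i))) + s i"
    using le Qi unfolding Q_def by auto
  show "\<And>j. j < n \<Longrightarrow> i < j \<Longrightarrow> P $$ (i,j) \<noteq> 0 \<Longrightarrow>
            int (degree (P $$ (i,j))) + s j < int (degree (P $$ (i,i))) + s i"
  proof -
    fix j assume j: "j < n" "i < j" "P $$ (i,j) \<noteq> 0"
    have "\<not> Q j" using Qle j by fastforce
    then show "int (degree (P $$ (i,j))) + s j < int (degree (P $$ (i,i))) + s i"
      using le[OF j(1) j(3)] Qi j unfolding Q_def dc by auto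
  qed
qed

lemma pivot_build:
  assumes car: "P \<in> carrier_mat n n" and i: "i < n" and nz: "P $$ (i,i) \<noteq> 0"
    and le: "\<And>j. j < n \<Longrightarrow> P $$ (i,j) \<noteq> 0 \<Longrightarrow>
            int (degree (P $$ (i,j))) + t j \<le> int (degree (P $$ (i,i))) + t i"
    and lt: "\<And>j. j < n \<Longrightarrow> i < j \<Longrightarrow> P $$ (i,j) \<noteq> 0 \<Longrightarrow>
            int (degree (P $$ (i,j))) + t j < int (degree (P $$ (i,i))) + t i"
  shows "row_spivot t P i = i"
proof -
  have dc: "dim_col P = n" using car by auto
  have rs: "row_sdeg t P i = int (degree (P $$ (i,i))) + t i"
    unfolding row_sdeg_def dc
    by (rule Max_eqI) (auto intro: le simp: i nz)
  show ?thesis unfolding row_spivot_def rs dc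
  proof (rule Greatest_equality)
    show "i < n \<and> P $$ (i, i) \<noteq> 0 \<and> int (degree (P $$ (i, i))) + t i = int (degree (P $$ (i, i))) + t i"
      using i nz by simp
  next
    fix y assume "y < n \<and> P $$ (i, y) \<noteq> 0 \<and> int (degree (P $$ (i, y))) + t y = int (degree (P $$ (i, i))) + t i"
    then show "y \<le> i" using lt[of y] by fastforce
  qed
qed

lemma popov_det_degree:
  assumes pop: "is_popov s P" and car: "P \<in> carrier_mat n n"
  shows "(\<Sum>i\<in>{0..<n}. degree (P $$ (i,i))) \<le> degree (det P)"
proof -
  define D where "D = (\<Sum>i\<in>{0..<n}. degree (P $$ (i,i)))"
  define f where "f = (\<lambda>p. signof p * (\<Prod> i = 0 ..< n. P $$ (i, p i)))"
  have nzd: "\<And>i. i < n \<Longrightarrow> P $$ (i,i) \<noteq> 0" using pivot_facts(1)[OF pop car] by auto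
  have lc: "\<And>i. i < n \<Longrightarrow> lead_coeff (P $$ (i,i)) = 1" using popov_dims[OF pop car] by auto
  have detP: "det P = (\<Sum>p\<in>{p. p permutes {0..<n}}. f p)" unfolding f_def by (rule det_def'[OF car])
  have c1: "coeff (f id) D = 1"
  proof -
    have "f id = (\<Prod> i = 0 ..< n. P $$ (i, i))" unfolding f_def by simp
    moreover have "degree (\<Prod> i = 0 ..< n. P $$ (i, i)) = D"
      unfolding D_def by (rule degree_prod_eq_sum_degree) (auto simp: nzd)
    moreover have "lead_coeff (\<Prod> i = 0 ..< n. P $$ (i, i)) = 1"
      unfolding lead_coeff_prod by (simp add: lc)
    ultimately show ?thesis by simp
  qed
  have c0: "coeff (f p) D = 0" if p: "p permutes {0..<n}" and pid: "p \<noteq> id" for p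
  proof (cases "(\<Prod> i = 0 ..< n. P $$ (i, p i)) = 0")
    case True then show ?thesis unfolding f_def by (simp only: True mult_zero_right coeff_0)
  next
    case False
    then have nz: "\<And>i. i < n \<Longrightarrow> P $$ (i, p i) \<noteq> 0" by auto
    have pin: "\<And>i. i < n \<Longrightarrow> p i < n" using p by (simp add: permutes_in_image)
    obtain k where k: "k < n" "k < p k" using perm_id_if_le[OF p] pid by force
    have "(\<Sum>i\<in>{0..<n}. int (degree (P $$ (i, p i))) + s (p i))
        < (\<Sum>i\<in>{0..<n}. int (degree (P $$ (i, i))) + s i)"
    proof (rule sum_strict_mono_ex1)
      show "finite {0..<n}" by simp
      show "\<forall>x\<in>{0..<n}. int (degree (P $$ (x, p x))) + s (p x) \<le> int (degree (P $$ (x, x))) + s x"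
        using pivot_facts(2)[OF pop car] nz pin by simp
      show "\<exists>a\<in>{0..<n}. int (degree (P $$ (a, p a))) + s (p a) < int (degree (P $$ (a, a))) + s a"
        using pivot_facts(3)[OF pop car k(1) pin[OF k(1)] k(2) nz[OF k(1)]] k by auto
    qed
    moreover have "(\<Sum>i\<in>{0..<n}. s (p i)) = (\<Sum>i\<in>{0..<n}. s i)"
      using sum.permute[OF p, of s] by (simp add: comp_def)
    ultimately have "(\<Sum>i\<in>{0..<n}. int (degree (P $$ (i, p i))))
        < (\<Sum>i\<in>{0..<n}. int (degree (P $$ (i, i))))" by (simp add: sum.distrib)
    then have "int (\<Sum>i\<in>{0..<n}. degree (P $$ (i, p i))) < int D" unfolding D_def
      by (simp only: of_nat_sum)
    then have lt: "(\<Sum>i\<in>{0..<n}. degree (P $$ (i, p i))) < D" by linarith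
    have "degree (\<Prod> i = 0 ..< n. P $$ (i, p i)) = (\<Sum>i\<in>{0..<n}. degree (P $$ (i, p i)))"
      by (rule degree_prod_eq_sum_degree) (auto simp: nz)
    moreover have "degree (f p) \<le> degree (\<Prod> i = 0 ..< n. P $$ (i, p i))"
      unfolding f_def using degree_mult_le[of "signof p :: 'a poly"] by (simp add: degree_of_int)
    ultimately have "degree (f p) < D" using lt by simp
    then show ?thesis by (simp add: coeff_eq_0)
  qed
  have "coeff (det P) D = (\<Sum>p\<in>{p. p permutes {0..<n}}. coeff (f p) D)"
    unfolding detP coeff_sum ..
  also have "\<dots> = coeff (f id) D + (\<Sum>p\<in>{p. p permutes {0..<n}} - {id}. coeff (f p) D)"
    by (rule sum.remove) (auto simp: finite_permutations permutes_id)
  also have "\<dots> = 1" using c1 c0 by simp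
  finally have "coeff (det P) D \<noteq> 0" by simp
  then show ?thesis unfolding D_def[symmetric] by (rule le_degree)
qed


lemma gauss_bound: "(\<Sum>i<m. real i * real sg) \<le> real m ^ 2 * real sg / 2"
proof (induction m)
  case 0 then show ?case by simp
next
  case (Suc m)
  have "(\<Sum>i<Suc m. real i * real sg) = (\<Sum>i<m. real i * real sg) + real m * real sg" by simp
  also have "\<dots> \<le> real m ^ 2 * real sg / 2 + real m * real sg" using Suc by simp
  also have "\<dots> \<le> real (Suc m) ^ 2 * real sg / 2" by (simp add: power2_eq_square algebra_simps)
  finally show ?case .
qed

theorem mainTheorem12:
  fixes A :: "'a::field poly mat" and m \<sigma> :: nat and s :: "nat \<Rightarrow> int" and \<pi> :: "nat \<Rightarrow> nat"
  assumes "A \<in> carrier_mat m m" and "det A \<noteq> 0"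
    and "\<sigma> > degree (det A)"
    and "\<pi> permutes {..<m}"
    and "\<forall>i j. i \<le> j \<and> j < m \<longrightarrow> s (\<pi> i) \<le> s (\<pi> j)"
  shows "(\<forall>j<m. tShift s \<pi> \<sigma> j \<ge> 0)
    \<and> (0 < m \<longrightarrow> Min {tShift s \<pi> \<sigma> j | j. j < m} = 0)
    \<and> (\<forall>j<m. tShift s \<pi> \<sigma> j \<le> (int m - 1) * int \<sigma>)
    \<and> real_of_int (\<Sum>j<m. tShift s \<pi> \<sigma> j) \<le> real m ^ 2 * real \<sigma> / 2
    \<and> (\<forall>P. is_popov s P \<and> left_uni_equiv P A \<longrightarrow> is_popov (tShift s \<pi> \<sigma>) P)"
proof -
  note Acar = assms(1) and perm = assms(4) and mono = assms(5)
  define t where "t = tShift s \<pi> \<sigma>"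
    have iperm: "inv_into UNIV \<pi> permutes {..<m}" using permutes_inv[OF perm] .
  have ipm: "\<And>j. j < m \<Longrightarrow> inv_into UNIV \<pi> j < m" using permutes_in_image[OF iperm] by auto
  have pip: "\<And>j. \<pi> (inv_into UNIV \<pi> j) = j" using permutes_inverses(1)[OF perm] .
  have tdef: "\<And>j. t j = tHat s \<pi> \<sigma> (inv_into UNIV \<pi> j)" unfolding t_def tShift_def ..
  have tnn: "\<And>i. i < m \<Longrightarrow> 0 \<le> tHat s \<pi> \<sigma> i"
    using tHat_diff[of m s \<pi> 0 _ \<sigma>, OF mono] by auto
  have P1: "\<forall>j<m. t j \<ge> 0" using tnn ipm tdef by auto
  have P2: "0 < m \<longrightarrow> Min {t j | j. j < m} = 0"
  proof
    assume m0: "0 < m"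
    have "\<pi> 0 < m" using permutes_in_image[OF perm] m0 by auto
    moreover have "t (\<pi> 0) = 0" unfolding tdef using permutes_inverses(2)[OF perm] by simp
    ultimately show "Min {t j | j. j < m} = 0" using P1
      by (intro Min_eqI) auto
  qed
  have P3: "\<forall>j<m. t j \<le> (int m - 1) * int \<sigma>"
  proof (intro allI impI)
    fix j assume j: "j < m"
    have "t j \<le> int (inv_into UNIV \<pi> j) * int \<sigma>" unfolding tdef using tHat_le[of _ m s \<pi> \<sigma>, OF ipm[OF j] mono] .
    also have "\<dots> \<le> (int m - 1) * int \<sigma>" using ipm[OF j] by (intro mult_right_mono) auto
    finally show "t j \<le> (int m - 1) * int \<sigma>" .
  qed
  have P4: "real_of_int (\<Sum>j<m. t j) \<le> real m ^ 2 * real \<sigma> / 2"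
  proof -
    have "(\<Sum>j<m. t j) = (\<Sum>i<m. tHat s \<pi> \<sigma> i)"
      unfolding tdef using sum.permute[OF iperm, of "tHat s \<pi> \<sigma>"] by (simp add: comp_def)
    then have "real_of_int (\<Sum>j<m. t j) = (\<Sum>i<m. real_of_int (tHat s \<pi> \<sigma> i))" by simp
    also have "\<dots> \<le> (\<Sum>i<m. real i * real \<sigma>)"
    proof (rule sum_mono)
      fix i assume "i \<in> {..<m}"
      then have "tHat s \<pi> \<sigma> i \<le> int i * int \<sigma>" using tHat_le[of i m s \<pi> \<sigma>, OF _ mono] by auto
      then show "real_of_int (tHat s \<pi> \<sigma> i) \<le> real i * real \<sigma>"
        by (metis of_int_le_iff of_int_mult of_int_of_nat_eq)
    qed
    also have "\<dots> \<le> real m ^ 2 * real \<sigma> / 2" by (rule gauss_bound)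
    finally show ?thesis .
  qed
  have P5: "is_popov t P" if pop: "is_popov s P" and eq: "left_uni_equiv P A" for P
  proof -
    obtain U where U: "unimodular U m" "P = U * A" using eq Acar unfolding left_uni_equiv_def by auto
    have Ucar: "U \<in> carrier_mat m m" and Uu: "is_unit (det U)" using U unfolding unimodular_def by auto
    have car: "P \<in> carrier_mat m m" using U(2) Ucar Acar by auto
    note D = popov_dims[OF pop car]
    have detP: "det P = det U * det A" using U(2) det_mult[OF Ucar Acar] by simp
    have dU0: "det U \<noteq> 0" using Uu by (metis not_is_unit_0)
    have dU: "det U \<noteq> 0" "degree (det U) = 0" using dU0 Uu is_unit_iff_degree[of "det U"] by auto
    have "degree (det P) = degree (det A)" unfolding detP using dU assms(2)
      by (simp add: degree_mult_eq)
    then have Dlt: "(\<Sum>i\<in>{0..<m}. degree (P $$ (i,i))) < \<sigma>"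
      using popov_det_degree[OF pop car] assms(3) by simp
    have dlt: "\<And>j. j < m \<Longrightarrow> degree (P $$ (j,j)) < \<sigma>"
    proof -
      fix j assume j: "j < m"
      have "degree (P $$ (j,j)) \<le> (\<Sum>i\<in>{0..<m}. degree (P $$ (i,i)))"
        by (rule member_le_sum) (use j in auto)
      then show "degree (P $$ (j,j)) < \<sigma>" using Dlt by simp
    qed
    have offd: "\<And>i j. i < m \<Longrightarrow> j < m \<Longrightarrow> i \<noteq> j \<Longrightarrow> P $$ (i,j) \<noteq> 0 \<Longrightarrow>
        degree (P $$ (i,j)) < \<sigma>"
    proof -
      fix i j assume ij: "i < m" "j < m" "i \<noteq> j" "P $$ (i,j) \<noteq> 0"
      then have "degree (P $$ (i,j)) < degree (P $$ (j,j))" using D by auto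
      then show "degree (P $$ (i,j)) < \<sigma>" using dlt[OF ij(2)] by simp
    qed
    have key: "int (degree (P $$ (i,j))) + t j \<le> int (degree (P $$ (i,i))) + t i \<and>
       (i < j \<longrightarrow> int (degree (P $$ (i,j))) + t j < int (degree (P $$ (i,i))) + t i)"
      if ij: "i < m" "j < m" "P $$ (i,j) \<noteq> 0" for i j
    proof (cases "i = j")
      case True then show ?thesis by simp
    next
      case False
      have le: "int (degree (P $$ (i,j))) + s j \<le> int (degree (P $$ (i,i))) + s i"
        using pivot_facts(2)[OF pop car ij(1) ij(2) ij(3)] .
      have lt: "i < j \<Longrightarrow> int (degree (P $$ (i,j))) + s j < int (degree (P $$ (i,i))) + s i"
        using pivot_facts(3)[OF pop car ij(1) ij(2) _ ij(3)] by simp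
      have dg: "int (degree (P $$ (i,j))) < int \<sigma>" using offd[OF ij(1,2) False ij(3)] by simp
      define a where "a = inv_into UNIV \<pi> i"
      define b where "b = inv_into UNIV \<pi> j"
      have am: "a < m" and bm: "b < m" using ipm ij unfolding a_def b_def by auto
      have ab: "a \<noteq> b" unfolding a_def b_def using False pip by metis
      have si: "s i = s (\<pi> a)" and sj: "s j = s (\<pi> b)" unfolding a_def b_def pip by auto
      have ti: "t i = tHat s \<pi> \<sigma> a" and tj: "t j = tHat s \<pi> \<sigma> b" unfolding a_def b_def tdef by auto
      show ?thesis
      proof (cases "a < b")
        case True
        note H = tHat_diff[of m s \<pi> a b \<sigma>, OF mono]
        have "t j - t i \<le> s j - s i" using H True bm unfolding si sj ti tj by auto
        then show ?thesis using le lt by auto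
      next
        case False
        then have ba: "b < a" using ab by simp
        note H = tHat_diff[of m s \<pi> b a \<sigma>, OF mono]
        have "t i - t j = s i - s j \<or> t i - t j \<ge> int \<sigma>" using H ba am unfolding si sj ti tj by auto
        then show ?thesis using le lt dg by auto
      qed
    qed
    have piv: "row_spivot t P i = i" if i: "i < m" for i
      by (rule pivot_build[OF car i pivot_facts(1)[OF pop car i]]) (use key i in auto)
    show "is_popov t P" unfolding is_popov_def
      using car D piv by blast
  qed
  show ?thesis unfolding t_def[symmetric] using P1 P2 P3 P4 P5 by blast
qed

end
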